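(* There exist a compact metric space $X$ and a homeomorphism $f\colon X\to X$ such that $\mathrm{SProx}(f)=\Delta_X$ but $\mathrm{Prox}(f)\ne\Delta_X$.
   Context: $\Delta_X=\{(x,x):x\in X\}$. $\mathrm{Prox}(f)=\{(x,y):\liminf_{n\to\infty} d(f^nx,f^ny)=0\}$; $\mathrm{SProx}(f)=\{(x,y):\{n\in\mathbb N:d(f^nx,f^ny)<\varepsilon\}$ is syndetic for every $\varepsilon>0\}$, where a subset of $\mathbb N$ is syndetic if it meets every subset of $\mathbb N$ containing arbitrarily long runs of consecutive integers. *)

theory Defs
  imports "HOL-Analysis.Analysis" "HOL-Library.Extended_Real"
begin

definition diag_on :: "'a set \<Rightarrow> ('a \<times> 'a) set" where
  "diag_on X = {(x, x) | x. x \<in> X}"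

definition thick_set :: "nat set \<Rightarrow> bool" where
  "thick_set T \<longleftrightarrow> (\<forall>k. \<exists>a. {a..<a + k} \<subseteq> T)"

definition syndetic :: "nat set \<Rightarrow> bool" where
  "syndetic S \<longleftrightarrow> (\<forall>T. thick_set T \<longrightarrow> S \<inter> T \<noteq> {})"

definition Prox :: "'a set \<Rightarrow> ('a \<Rightarrow> 'a \<Rightarrow> real) \<Rightarrow> ('a \<Rightarrow> 'a) \<Rightarrow> ('a \<times> 'a) set" where
  "Prox X d f = {(x, y). x \<in> X \<and> y \<in> X \<and>
      liminf (\<lambda>n. ereal (d ((f ^^ n) x) ((f ^^ n) y))) = 0}"

definition SProx :: "'a set \<Rightarrow> ('a \<Rightarrow> 'a \<Rightarrow> real) \<Rightarrow> ('a \<Rightarrow> 'a) \<Rightarrow> ('a \<times> 'a) set" where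
  "SProx X d f = {(x, y). x \<in> X \<and> y \<in> X \<and>
      (\<forall>\<epsilon>>0. syndetic {n. d ((f ^^ n) x) ((f ^^ n) y) < \<epsilon>})}"

end

theory Submission
  imports Defs
begin


definition al :: real where "al = sqrt 2"
definition tau :: "int \<Rightarrow> real" where
  "tau n = (if 0 \<le> n then (1/2)^nat n else -((1/2)^nat(1-n)))"
definition sq :: "int \<Rightarrow> real" where "sq n = sqrt (real (nat n))"
definition xo :: "int \<Rightarrow> complex" where
  "xo n = complex_of_real (1 + tau n) * cis (2*pi*(of_int n * al + sq n))"
definition EE :: "real \<Rightarrow> complex" where
  "EE t = (if t < 0 then cis (2*pi*t) else xo \<lfloor>ln t\<rfloor>)"
definition XX :: "real set" where "XX = {-1..<0} \<union> range (\<lambda>n::int. exp (of_int n))"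
definition FF :: "real \<Rightarrow> real" where "FF t = (if t < 0 then frac (t + al) - 1 else exp 1 * t)"
definition dd :: "real \<Rightarrow> real \<Rightarrow> real" where "dd p q = cmod (EE p - EE q)"

lemma cis_per: "cis (2*pi*(x + of_int k)) = cis (2*pi*x)"
proof -
  have "cis (2*pi*(x + of_int k)) = cis (2*pi*x) * cis (2*pi*(of_int k))"
    by (metis cis_mult distrib_left)
  also have "cis (2*pi*(of_int k)) = 1" by (rule cis_multiple_2pi) simp
  finally show ?thesis by simp
qed

lemma norm_cis_diff: "cmod (cis a - cis b) = cmod (cis (a - b) - 1)"
proof -
  have "cis a - cis b = cis b * (cis (a - b) - 1)"
    by (simp add: right_diff_distrib cis_mult)
  then show ?thesis by (simp add: norm_mult)
qed

lemma cis_sq: "(cmod (cis u - 1))^2 = 2 - 2*cos u"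
proof -
  have "(cmod (cis u - 1))^2 = (cos u - 1)^2 + (sin u)^2"
    by (simp add: cmod_power2)
  also have "\<dots> = 2 - 2*cos u" using sin_cos_squared_add[of u]
    by (simp add: power2_diff)
  finally show ?thesis .
qed

lemma cis_lip: "cmod (cis u - 1) \<le> \<bar>u\<bar>"
proof -
  have "cos u = 1 - 2 * sin (u/2) ^ 2" using cos_double_sin[of "u/2"] by simp
  hence "(cmod (cis u - 1))^2 = 4 * (sin (u/2))^2" using cis_sq[of u] by simp
  also have "\<dots> \<le> 4 * (u/2)^2"
    using abs_sin_x_le_abs_x[of "u/2"]
  proof -
    have "\<bar>sin (u/2)\<bar>^2 \<le> \<bar>u/2\<bar>^2" using abs_sin_x_le_abs_x[of "u/2"] by (rule power_mono) simp
    thus ?thesis by (simp add: power_divide)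
  qed
  also have "\<dots> = \<bar>u\<bar>^2" by (simp add: power2_eq_square)
  finally have "(cmod (cis u - 1))^2 \<le> \<bar>u\<bar>^2" .
  thus ?thesis by (rule power2_le_imp_le) simp
qed

lemma cis_far: "cos u \<le> 0 \<Longrightarrow> 1 \<le> cmod (cis u - 1)"
proof -
  assume "cos u \<le> 0"
  hence "1 \<le> (cmod (cis u - 1))^2" using cis_sq[of u] by simp
  thus ?thesis using power2_le_imp_le[of 1 "cmod (cis u - 1)"] by simp
qed

lemma pow_sep:
  fixes a b :: nat assumes "a \<noteq> b"
  shows "(1/2::real)^a / 2 \<le> \<bar>(1/2)^a - (1/2)^b\<bar>"
proof (cases "a < b")
  case True
  hence h: "(1/2::real)^b \<le> (1/2)^a / 2" using power_decreasing[of "a+1" b "1/2::real"] by simp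
  have "0 \<le> (1/2::real)^b" by simp
  thus ?thesis using h abs_ge_self[of "(1/2::real)^a - (1/2)^b"] by linarith
next
  case False
  hence "b + 1 \<le> a" using assms by simp
  hence h: "(1/2::real)^a \<le> (1/2)^b / 2" using power_decreasing[of "b+1" a "1/2::real"] by simp
  have "0 \<le> (1/2::real)^a" by simp
  thus ?thesis using h abs_ge_minus_self[of "(1/2::real)^a - (1/2)^b"] by linarith
qed

lemma tau_abs: "\<bar>tau n\<bar> = (if 0 \<le> n then (1/2)^nat \<bar>n\<bar> else (1/2)^(nat \<bar>n\<bar> + 1))"
proof (cases "0 \<le> n")
  case True thus ?thesis by (simp add: tau_def)
next
  case False
  hence "nat (1 - n) = nat \<bar>n\<bar> + 1" by simp
  thus ?thesis using False by (simp add: tau_def)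
qed

lemma tau_lower: "(1/2)^(nat \<bar>n\<bar> + 1) \<le> \<bar>tau n\<bar>"
  by (simp add: tau_abs)

lemma tau_upper: "\<bar>tau n\<bar> \<le> (1/2)^(nat \<bar>n\<bar>)"
  by (simp add: tau_abs power_le_one)

lemma tau_ne: "tau n \<noteq> 0"
  using tau_lower[of n] by (metis abs_zero not_less zero_less_power zero_less_divide_1_iff zero_less_numeral)

lemma tau_nz_half: "n \<noteq> 0 \<Longrightarrow> \<bar>tau n\<bar> \<le> 1/2"
proof -
  assume "n \<noteq> 0"
  hence "1 \<le> nat \<bar>n\<bar>" by simp
  hence "(1/2::real)^(nat \<bar>n\<bar>) \<le> (1/2)^1" by (intro power_decreasing) auto
  thus ?thesis using tau_upper[of n] by simp
qed

lemma tau_gt: "-1/2 < tau n"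
proof (cases "0 \<le> n")
  case True 
  have "tau n = (1/2)^nat n" using True by (simp add: tau_def)
  thus ?thesis using zero_less_power[of "1/2::real" "nat n"] by linarith
next
  case False
  hence "2 \<le> nat (1-n)" by simp
  hence h: "(1/2::real)^nat(1-n) \<le> (1/2)^2" by (intro power_decreasing) auto
  have "tau n = -((1/2)^nat(1-n))" using False by (simp add: tau_def)
  thus ?thesis using h by (simp add: power2_eq_square)
qed

lemma neg_aux: "(x::real) / 2 \<le> \<bar>x - y\<bar> \<Longrightarrow> a = -x \<Longrightarrow> b = -y \<Longrightarrow> 0 \<le> x \<Longrightarrow> \<bar>a\<bar>/2 \<le> \<bar>a - b\<bar>"
  by linarith

lemma pos_aux: "(x::real) / 2 \<le> \<bar>x - y\<bar> \<Longrightarrow> a = x \<Longrightarrow> b = y \<Longrightarrow> 0 \<le> x \<Longrightarrow> \<bar>a\<bar>/2 \<le> \<bar>a - b\<bar>"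
  by linarith

lemma tau_sep: "m \<noteq> n \<Longrightarrow> \<bar>tau n\<bar> / 2 \<le> \<bar>tau n - tau m\<bar>"
proof -
  assume mn: "m \<noteq> n"
  show ?thesis
  proof (cases "0 \<le> n")
    case n: True
    show ?thesis
    proof (cases "0 \<le> m")
      case True
      have "nat n \<noteq> nat m" using mn n True by simp
      hence "(1/2::real)^nat n / 2 \<le> \<bar>(1/2)^nat n - (1/2)^nat m\<bar>" by (rule pow_sep)
      moreover have "tau n = (1/2)^nat n" "tau m = (1/2)^nat m" using n True by (simp_all add: tau_def)
      moreover have "0 \<le> (1/2::real)^nat n" by simp
      ultimately show ?thesis by (rule pos_aux)
    next
      case False
      have "tau m < 0" using False by (simp add: tau_def)
      moreover have "tau n > 0" using n by (simp add: tau_def)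
      ultimately show ?thesis by linarith
    qed
  next
    case n: False
    show ?thesis
    proof (cases "0 \<le> m")
      case True
      have "tau m > 0" using True by (simp add: tau_def)
      moreover have "tau n < 0" using n by (simp add: tau_def)
      ultimately show ?thesis by linarith
    next
      case False
      have "nat (1-n) \<noteq> nat (1-m)" using mn n False by simp
      hence "(1/2::real)^nat(1-n) / 2 \<le> \<bar>(1/2)^nat(1-n) - (1/2)^nat(1-m)\<bar>" by (rule pow_sep)
      moreover have "tau n = -((1/2)^nat(1-n))" "tau m = -((1/2)^nat(1-m))" using n False by (simp_all add: tau_def)
      moreover have "0 \<le> (1/2::real)^nat(1-n)" by simp
      ultimately show ?thesis by (rule neg_aux)
    qed
  qed
qed

lemma tau_inj: "tau n = tau m \<Longrightarrow> n = m"
proof (rule ccontr)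
  assume e: "tau n = tau m" and ne: "n \<noteq> m"
  have a: "\<bar>tau n\<bar> / 2 \<le> \<bar>tau n - tau m\<bar>" using tau_sep[of m n] ne by blast
  have b: "\<bar>tau n - tau m\<bar> = 0" using e by simp
  have c: "0 < \<bar>tau n\<bar>" using tau_ne[of n] by simp
  show False using a b c by linarith
qed

lemma tau_eventually: "0 < e \<Longrightarrow> \<exists>N::nat. \<forall>n. N \<le> nat \<bar>n\<bar> \<longrightarrow> \<bar>tau n\<bar> < e"
proof -
  assume e: "0 < e"
  obtain N where N: "(1/2::real)^N < e" using real_arch_pow_inv[OF e, of "1/2"] by auto
  show ?thesis
  proof (intro exI allI impI)
    fix n :: int assume "N \<le> nat \<bar>n\<bar>"
    hence "(1/2::real)^(nat \<bar>n\<bar>) \<le> (1/2)^N" by (intro power_decreasing) auto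
    thus "\<bar>tau n\<bar> < e" using tau_upper[of n] N by linarith
  qed
qed

lemma norm_xo: "cmod (xo n) = 1 + tau n"
proof -
  have "cmod (complex_of_real (1 + tau n)) = \<bar>1 + tau n\<bar>" by (rule norm_of_real)
  thus ?thesis using tau_gt[of n] by (simp add: xo_def norm_mult del: of_real_add)
qed

lemma EE_circ: "t < 0 \<Longrightarrow> EE t = cis (2*pi*t)" by (simp add: EE_def)
lemma EE_orb: "EE (exp (of_int n)) = xo n" by (simp add: EE_def)

lemma cis_eq_int: "cis (2*pi*a) = cis (2*pi*b) \<Longrightarrow> a - b \<in> \<int>"
proof -
  assume "cis (2*pi*a) = cis (2*pi*b)"
  hence "cmod (cis (2*pi*a - 2*pi*b) - 1) = 0" using norm_cis_diff[of "2*pi*a" "2*pi*b"] by simp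
  hence "cos (2*pi*a - 2*pi*b) = 1" using cis_sq[of "2*pi*a - 2*pi*b"] by simp
  then obtain k :: int where "2*pi*a - 2*pi*b = of_int k * 2 * pi" using cos_one_2pi_int by blast
  hence "2*pi*(a - b - of_int k) = 0" by (simp add: algebra_simps)
  hence "a - b = k" by simp
  thus ?thesis by simp
qed

lemma EE_inj: "inj_on EE XX"
proof (rule inj_onI)
  fix p q assume p: "p \<in> XX" and q: "q \<in> XX" and e: "EE p = EE q"
  show "p = q"
  proof (cases "p < 0")
    case pc: True
    show ?thesis
    proof (cases "q < 0")
      case True
      have "p - q \<in> \<int>" using e pc True by (simp add: EE_circ cis_eq_int)
      then obtain k :: int where k: "p - q = k" by (metis Ints_cases)
      have "-1 \<le> p" "-1 \<le> q" using p q pc True by (auto simp: XX_def)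
      hence "real_of_int k < 1" "-1 < real_of_int k" using k pc True by linarith+
      hence "k < 1" "-1 < k" by simp_all
      hence "k = 0" by simp
      thus ?thesis using k by simp
    next
      case False
      then obtain m where m: "q = exp (of_int m)" using q by (auto simp: XX_def)
      have "cmod (EE q) = 1 + tau m" using m by (simp add: EE_orb norm_xo)
      moreover have "cmod (EE p) = 1" using pc by (simp add: EE_circ)
      ultimately show ?thesis using e tau_ne[of m] by simp
    qed
  next
    case pc: False
    then obtain n where n: "p = exp (of_int n)" using p by (auto simp: XX_def)
    show ?thesis
    proof (cases "q < 0")
      case True
      have "cmod (EE p) = 1 + tau n" using n by (simp add: EE_orb norm_xo)
      moreover have "cmod (EE q) = 1" using True by (simp add: EE_circ)
      ultimately show ?thesis using e tau_ne[of n] by simp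
    next
      case False
      then obtain m where m: "q = exp (of_int m)" using q by (auto simp: XX_def)
      have "1 + tau n = 1 + tau m" using e n m norm_xo[of n] norm_xo[of m] by (simp add: EE_orb)
      thus ?thesis using tau_inj n m by simp
    qed
  qed
qed

lemma ms: "Metric_space XX dd"
proof
  fix x y z
  show "0 \<le> dd x y" by (simp add: dd_def)
  show "dd x y = dd y x" by (simp add: dd_def norm_minus_commute)
  show "x \<in> XX \<Longrightarrow> y \<in> XX \<Longrightarrow> (dd x y = 0) = (x = y)"
    using EE_inj by (auto simp: dd_def inj_on_def)
  show "dd x z \<le> dd x y + dd y z" unfolding dd_def
    using norm_triangle_ineq[of "EE x - EE y" "EE y - EE z"] by simp
qed



lemma cis_frac: "cis (2*pi*(frac y - 1)) = cis (2*pi*y)"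
proof -
  have "cis (2*pi*(frac y - 1 + of_int (\<lfloor>y\<rfloor> + 1))) = cis (2*pi*(frac y - 1))" by (rule cis_per)
  moreover have "frac y - 1 + of_int (\<lfloor>y\<rfloor> + 1) = y" by (simp add: frac_def)
  ultimately show ?thesis by simp
qed

lemma circ_image: "EE ` {-1..<0} = sphere 0 1"
proof
  show "EE ` {-1..<0} \<subseteq> sphere 0 1" by (auto simp: EE_circ)
  show "sphere 0 1 \<subseteq> EE ` {-1..<0}"
  proof
    fix z :: complex assume "z \<in> sphere 0 1"
    hence z1: "cmod z = 1" by simp
    hence "z \<noteq> 0" by auto
    hence "cis (Arg z) = z" using z1 by (simp add: cis_Arg sgn_div_norm)
    define a where "a = Arg z / (2*pi)"
    have ca: "cis (2*pi*a) = z" using \<open>cis (Arg z) = z\<close> by (simp add: a_def)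
    have "-pi < Arg z" "Arg z \<le> pi" using Arg_bounded[of z] by auto
    hence ab: "-1/2 < a" "a \<le> 1/2" using pi_gt_zero by (auto simp: a_def field_simps)
    show "z \<in> EE ` {-1..<0}"
    proof (cases "a < 0")
      case True
      hence "EE a = z" using ca by (simp add: EE_circ)
      moreover have "a \<in> {-1..<0}" using True ab by simp
      ultimately show ?thesis by (metis imageI)
    next
      case False
      have "cis (2*pi*(a - 1 + of_int 1)) = cis (2*pi*(a-1))" by (rule cis_per)
      hence "EE (a - 1) = z" using ca ab by (simp add: EE_circ)
      moreover have "a - 1 \<in> {-1..<0}" using False ab by simp
      ultimately show ?thesis by (metis imageI)
    qed
  qed
qed

lemma EE_image: "EE ` XX = sphere 0 1 \<union> range xo"
proof -
  have "EE ` range (\<lambda>n::int. exp (of_int n)) = range xo"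
    by (auto simp: image_image EE_orb)
  thus ?thesis unfolding XX_def image_Un circ_image by simp
qed

lemma xo_bound: "cmod (xo n) \<le> 2"
proof -
  have "(1/2::real)^nat \<bar>n\<bar> \<le> 1" by (rule power_le_one) auto
  thus ?thesis using tau_upper[of n] norm_xo[of n] by linarith
qed

lemma closed_S: "closed (sphere 0 1 \<union> range xo)"
  unfolding closed_sequential_limits
proof (intro allI impI, elim conjE)
  fix z :: "nat \<Rightarrow> complex" and l
  assume z: "\<forall>n. z n \<in> sphere 0 1 \<union> range xo" and lim: "z \<longlonglongrightarrow> l"
  show "l \<in> sphere 0 1 \<union> range xo"
  proof (cases "cmod l = 1")
    case True thus ?thesis by simp
  next
    case False
    define \<delta> where "\<delta> = \<bar>cmod l - 1\<bar>"
    have dpos: "0 < \<delta>" using False by (simp add: \<delta>_def)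
    obtain N where N: "\<forall>n. N \<le> nat \<bar>n\<bar> \<longrightarrow> \<bar>tau n\<bar> < \<delta>/2"
      using tau_eventually[of "\<delta>/2"] dpos by auto
    define A where "A = xo ` {-int N..int N}"
    have "closed A" unfolding A_def by (intro finite_imp_closed) simp
    moreover have "eventually (\<lambda>k. z k \<in> A) sequentially"
    proof -
      have "eventually (\<lambda>k. dist (z k) l < \<delta>/2) sequentially"
        using tendstoD[OF lim, of "\<delta>/2"] dpos by simp
      thus ?thesis
      proof (rule eventually_mono)
        fix k assume dk: "dist (z k) l < \<delta>/2"
        have tri: "\<bar>cmod (z k) - cmod l\<bar> \<le> dist (z k) l"
          using norm_triangle_ineq3[of "z k" l] by (simp add: dist_norm)
        show "z k \<in> A"
        proof (cases "z k \<in> sphere 0 1")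
          case True
          hence "cmod (z k) = 1" by simp
          thus ?thesis using tri dk by (simp add: \<delta>_def)
        next
          case False
          then obtain n where n: "z k = xo n" using z by auto
          have "\<bar>(1 + tau n) - cmod l\<bar> < \<delta>/2" using tri dk n norm_xo[of n] by simp
          hence "\<delta>/2 \<le> \<bar>tau n\<bar>" unfolding \<delta>_def by (simp add: abs_if split: if_splits)
          hence "\<not> N \<le> nat \<bar>n\<bar>" using N by force
          hence "n \<in> {-int N..int N}" by auto
          thus ?thesis using n by (simp add: A_def)
        qed
      qed
    qed
    ultimately have "l \<in> A" using lim by (intro Lim_in_closed_set) auto
    thus ?thesis by (auto simp: A_def)
  qed
qed

lemma compact_S: "compact (EE ` XX)"
proof -
  have "bounded (sphere 0 1 \<union> range xo)"
  proof -
    have "sphere 0 1 \<union> range xo \<subseteq> cball (0::complex) 2"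
      using xo_bound by auto
    thus ?thesis using bounded_cball bounded_subset by blast
  qed
  thus ?thesis unfolding EE_image using closed_S by (simp add: compact_eq_bounded_closed)
qed

lemma cs: "compact_space (Metric_space.mtopology XX dd)"
proof -
  interpret M: Metric_space XX dd by (rule ms)
  show ?thesis unfolding M.compact_space_sequentially
  proof (intro allI impI)
    fix \<sigma> :: "nat \<Rightarrow> real" assume rs: "range \<sigma> \<subseteq> XX"
    have "seq_compact (EE ` XX)" by (rule compact_imp_seq_compact[OF compact_S])
    moreover have "\<forall>n. (EE \<circ> \<sigma>) n \<in> EE ` XX" using rs by auto
    ultimately obtain l r where l: "l \<in> EE ` XX" and r: "strict_mono r" and lim: "((EE \<circ> \<sigma>) \<circ> r) \<longlonglongrightarrow> l"
      unfolding seq_compact_def by blast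
    obtain q where q: "q \<in> XX" "l = EE q" using l by auto
    have "limitin M.mtopology (\<sigma> \<circ> r) q sequentially"
      unfolding M.limitin_metric
    proof (intro conjI allI impI)
      show "q \<in> XX" by fact
      fix e :: real assume e: "0 < e"
      have "eventually (\<lambda>n. dist (((EE \<circ> \<sigma>) \<circ> r) n) l < e) sequentially"
        using lim e by (simp add: tendsto_iff)
      thus "eventually (\<lambda>n. (\<sigma> \<circ> r) n \<in> XX \<and> dd ((\<sigma> \<circ> r) n) q < e) sequentially"
        by (rule eventually_mono) (use rs q in \<open>auto simp: dd_def dist_norm\<close>)
    qed
    thus "\<exists>l r. l \<in> XX \<and> strict_mono r \<and> limitin M.mtopology (\<sigma> \<circ> r) l sequentially"
      using q r by blast
  qed
qed



lemma EE_FF_circ: "t < 0 \<Longrightarrow> FF t < 0 \<and> EE (FF t) = cis (2*pi*al) * EE t"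
proof -
  assume t: "t < 0"
  have f: "FF t = frac (t + al) - 1" using t by (simp add: FF_def)
  have lt: "FF t < 0" using f frac_lt_1[of "t+al"] by linarith
  have "EE (FF t) = cis (2*pi*(frac (t + al) - 1))" using lt f by (simp add: EE_circ)
  also have "\<dots> = cis (2*pi*(t+al))" by (rule cis_frac)
  also have "\<dots> = cis (2*pi*al) * cis (2*pi*t)" by (simp add: cis_mult distrib_left add.commute)
  finally show ?thesis using lt t by (simp add: EE_circ)
qed

lemma FF_circ_mem: "t \<in> {-1..<0} \<Longrightarrow> FF t \<in> {-1..<0}"
  using frac_lt_1[of "t+al"] frac_ge_0[of "t+al"] by (simp add: FF_def)

lemma FF_orb: "FF (exp (of_int n)) = exp (of_int (n+1))"
  by (simp add: FF_def exp_add)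

lemma FF_exp: "FF (exp x) = exp (x + 1)"
  by (simp add: FF_def exp_add mult.commute)

lemma FFn_orb: "(FF^^k) (exp (of_int n)) = exp (of_int (n + int k))"
  by (induction k) (simp_all add: FF_exp algebra_simps)

lemma FFn_circ: "t \<in> {-1..<0} \<Longrightarrow> (FF^^k) t \<in> {-1..<0} \<and> EE ((FF^^k) t) = cis (2*pi*(t + real k * al))"
proof (induction k)
  case 0 thus ?case by (simp add: EE_circ)
next
  case (Suc k)
  hence ih: "(FF^^k) t \<in> {-1..<0}" "EE ((FF^^k) t) = cis (2*pi*(t + real k * al))" by auto
  have "EE ((FF^^Suc k) t) = cis (2*pi*al) * cis (2*pi*(t + real k * al))"
    using EE_FF_circ[of "(FF^^k) t"] ih by simp
  also have "\<dots> = cis (2*pi*(t + real (Suc k) * al))" by (simp add: cis_mult algebra_simps)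
  finally show ?case using FF_circ_mem[OF ih(1)] by simp
qed

lemma XX_cases: "p \<in> XX \<Longrightarrow> (p \<in> {-1..<0} \<Longrightarrow> P) \<Longrightarrow> (\<And>n. p = exp (of_int n) \<Longrightarrow> P) \<Longrightarrow> P"
  by (auto simp: XX_def)

lemma circ_XX: "t \<in> {-1..<0} \<Longrightarrow> t \<in> XX" by (simp add: XX_def)
lemma orb_XX: "exp (of_int n) \<in> XX" by (simp add: XX_def)

lemma FF_XX: "FF ` XX = XX"
proof
  show "FF ` XX \<subseteq> XX"
  proof
    fix y assume "y \<in> FF ` XX"
    then obtain p where p: "p \<in> XX" "y = FF p" by auto
    show "y \<in> XX" using p(1)
    proof (rule XX_cases)
      assume "p \<in> {-1..<0}" thus ?thesis using p(2) FF_circ_mem circ_XX by auto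
    next
      fix n assume "p = exp (of_int n)"
      hence "y = exp (of_int (n+1))" using p(2) FF_orb by simp
      thus ?thesis using orb_XX[of "n+1"] by simp
    qed
  qed
  show "XX \<subseteq> FF ` XX"
  proof
    fix t assume "t \<in> XX"
    thus "t \<in> FF ` XX"
    proof (rule XX_cases)
      assume t: "t \<in> {-1..<0}"
      define s where "s = frac (t - al) - 1"
      have s: "s \<in> {-1..<0}" using frac_lt_1[of "t-al"] frac_ge_0[of "t-al"] by (simp add: s_def)
      have "EE (FF s) = cis (2*pi*al) * cis (2*pi*(frac (t - al) - 1))"
        using EE_FF_circ[of s] s by (simp add: EE_circ s_def)
      also have "\<dots> = cis (2*pi*al) * cis (2*pi*(t - al))" by (simp add: cis_frac)
      also have "\<dots> = EE t" using t by (simp add: cis_mult algebra_simps EE_circ)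
      finally have "FF s = t" using EE_inj FF_circ_mem[OF s] t
        by (auto simp: inj_on_def XX_def)
      thus ?thesis using circ_XX[OF s] by blast
    next
      fix n assume "t = exp (of_int n)"
      hence "t = FF (exp (of_int (n - 1)))" by (simp add: FF_exp)
      thus ?thesis using orb_XX by blast
    qed
  qed
qed

lemma FF_inj: "inj_on FF XX"
proof (rule inj_onI)
  fix p q assume p: "p \<in> XX" and q: "q \<in> XX" and e: "FF p = FF q"
  show "p = q"
  proof (cases "p < 0")
    case pc: True
    show ?thesis
    proof (cases "q < 0")
      case True
      have "cis (2*pi*al) * EE p = cis (2*pi*al) * EE q"
        using EE_FF_circ[OF pc] EE_FF_circ[OF True] e by simp
      hence "EE p = EE q" by simp
      thus ?thesis using EE_inj p q by (auto simp: inj_on_def)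
    next
      case False
      hence "FF q > 0" using q by (auto simp: FF_def XX_def)
      thus ?thesis using EE_FF_circ[OF pc] e by simp
    qed
  next
    case pc: False
    show ?thesis
    proof (cases "q < 0")
      case True
      have "FF p > 0" using pc p by (auto simp: FF_def XX_def)
      thus ?thesis using EE_FF_circ[OF True] e by simp
    next
      case False
      thus ?thesis using e pc by (simp add: FF_def)
    qed
  qed
qed

lemma sqrt_diff_le: "0 \<le> a \<Longrightarrow> a \<le> b \<Longrightarrow> 0 < b \<Longrightarrow> sqrt b - sqrt a \<le> (b - a) / sqrt b"
proof -
  assume a: "0 \<le> a" and ab: "a \<le> b" and b: "0 < b"
  have d: "0 \<le> sqrt b - sqrt a" using ab by simp
  have "(sqrt b - sqrt a) * sqrt b \<le> (sqrt b - sqrt a) * (sqrt b + sqrt a)"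
    using d a by (intro mult_left_mono) auto
  also have "\<dots> = b - a" using a b by (simp add: algebra_simps)
  finally show ?thesis using b by (simp add: field_simps)
qed

definition eta :: "int \<Rightarrow> real" where "eta n = cmod (xo (n+1) - cis (2*pi*al) * xo n)"

lemma eta_bound: "eta n \<le> 4*pi*\<bar>sq (n+1) - sq n\<bar> + \<bar>tau (n+1)\<bar> + \<bar>tau n\<bar>"
proof -
  define c where "c = cis (2*pi*((of_int n + 1)*al + sq n))"
  define w where "w = cis (2*pi*(sq (n+1) - sq n))"
  have x1: "xo (n+1) = complex_of_real (1 + tau (n+1)) * c * w"
    by (simp add: xo_def c_def w_def cis_mult algebra_simps)
  have x0: "cis (2*pi*al) * xo n = complex_of_real (1 + tau n) * c"
    by (simp add: xo_def c_def cis_mult algebra_simps)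
  have "xo (n+1) - cis (2*pi*al) * xo n
      = complex_of_real (1 + tau (n+1)) * c * (w - 1) + complex_of_real (tau (n+1) - tau n) * c"
    unfolding x1 x0 by (simp add: algebra_simps)
  hence "eta n \<le> cmod (complex_of_real (1 + tau (n+1)) * c * (w - 1)) + cmod (complex_of_real (tau (n+1) - tau n) * c)"
    unfolding eta_def by (metis norm_triangle_ineq)
  also have "cmod (complex_of_real (1 + tau (n+1)) * c * (w - 1)) = \<bar>1 + tau (n+1)\<bar> * cmod (w - 1)"
    unfolding norm_mult norm_of_real by (simp add: c_def)
  also have "cmod (complex_of_real (tau (n+1) - tau n) * c) = \<bar>tau (n+1) - tau n\<bar>"
    unfolding norm_mult norm_of_real by (simp add: c_def)
  also have "\<bar>1 + tau (n+1)\<bar> * cmod (w - 1) \<le> 2 * (2*pi*\<bar>sq (n+1) - sq n\<bar>)"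
  proof (rule mult_mono)
    have "(1/2::real)^nat \<bar>n+1\<bar> \<le> 1" by (rule power_le_one) auto
    thus "\<bar>1 + tau (n+1)\<bar> \<le> 2" using tau_upper[of "n+1"] by linarith
    show "cmod (w - 1) \<le> 2*pi*\<bar>sq (n+1) - sq n\<bar>"
      using cis_lip[of "2*pi*(sq (n+1) - sq n)"] by (simp add: w_def abs_mult)
  qed auto
  finally show ?thesis by linarith
qed

lemma sq_small: "0 < e \<Longrightarrow> \<exists>M::nat. \<forall>n. M \<le> nat \<bar>n\<bar> \<longrightarrow> \<bar>sq (n+1) - sq n\<bar> < e"
proof -
  assume e: "0 < e"
  obtain M :: nat where M: "(1/e)^2 < real M" using reals_Archimedean2 by blast
  show ?thesis
  proof (intro exI allI impI)
    fix n :: int assume nM: "M \<le> nat \<bar>n\<bar>"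
    show "\<bar>sq (n+1) - sq n\<bar> < e"
    proof (cases "0 \<le> n")
      case True
      have sn: "sq n = sqrt (real (nat n))" "sq (n+1) = sqrt (real (nat n) + 1)"
        using True by (simp_all add: sq_def nat_add_distrib)
      have le: "sqrt (real (nat n) + 1) - sqrt (real (nat n)) \<le> 1 / sqrt (real (nat n) + 1)"
        using sqrt_diff_le[of "real (nat n)" "real (nat n) + 1"] by simp
      have "(1/e)^2 < real (nat n) + 1" using M nM True by linarith
      hence "sqrt ((1/e)^2) < sqrt (real (nat n) + 1)" by (simp only: real_sqrt_less_iff)
      hence "1/e < sqrt (real (nat n) + 1)" using e by simp
      hence "1 / sqrt (real (nat n) + 1) < e" using e by (simp add: field_simps)
      moreover have "0 \<le> sqrt (real (nat n) + 1) - sqrt (real (nat n))" by simp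
      ultimately show ?thesis using le sn by simp
    next
      case False
      hence "sq n = 0" "sq (n+1) = 0" by (simp_all add: sq_def)
      thus ?thesis using e by simp
    qed
  qed
qed

lemma eta_small: "0 < e \<Longrightarrow> \<exists>N::nat. \<forall>n. N \<le> nat \<bar>n\<bar> \<longrightarrow> eta n < e"
proof -
  assume e: "0 < e"
  obtain N1 where N1: "\<forall>n. N1 \<le> nat \<bar>n\<bar> \<longrightarrow> \<bar>tau n\<bar> < e/4" using tau_eventually[of "e/4"] e by auto
  obtain M where M: "\<forall>n. M \<le> nat \<bar>n\<bar> \<longrightarrow> \<bar>sq (n+1) - sq n\<bar> < e/(16*pi)"
    using sq_small[of "e/(16*pi)"] e by auto
  show ?thesis
  proof (intro exI allI impI)
    fix n :: int assume n: "N1 + M + 1 \<le> nat \<bar>n\<bar>"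
    have "\<bar>tau n\<bar> < e/4" using N1 n by simp
    moreover have "N1 \<le> nat \<bar>n+1\<bar>" using n by arith
    hence "\<bar>tau (n+1)\<bar> < e/4" using N1 by blast
    moreover have "\<bar>sq (n+1) - sq n\<bar> < e/(16*pi)" using M n by simp
    hence "4*pi*\<bar>sq (n+1) - sq n\<bar> < e/4" using pi_gt_zero by (simp add: field_simps)
    ultimately show "eta n < e" using eta_bound[of n] by linarith
  qed
qed



lemma dd_circ_orb: "t < 0 \<Longrightarrow> \<bar>tau n\<bar> \<le> dd t (exp (of_int n))"
proof -
  assume t: "t < 0"
  have "\<bar>cmod (EE t) - cmod (xo n)\<bar> \<le> cmod (EE t - xo n)" by (rule norm_triangle_ineq3)
  thus ?thesis using t by (simp add: dd_def EE_orb EE_circ norm_xo)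
qed

lemma dd_orb_orb: "\<bar>tau n - tau m\<bar> \<le> dd (exp (of_int n)) (exp (of_int m))"
proof -
  have "\<bar>cmod (xo n) - cmod (xo m)\<bar> \<le> cmod (xo n - xo m)" by (rule norm_triangle_ineq3)
  thus ?thesis by (simp add: dd_def EE_orb norm_xo)
qed

lemma cont: "continuous_map (Metric_space.mtopology XX dd) (Metric_space.mtopology XX dd) FF"
proof -
  interpret M: Metric_space XX dd by (rule ms)
  show ?thesis unfolding M.metric_continuous_map[OF ms]
  proof (intro conjI ballI allI impI)
    show "FF ` XX \<subseteq> XX" using FF_XX by simp
    fix a e assume a: "a \<in> XX" and e: "(0::real) < e"
    show "\<exists>\<delta>>0. \<forall>x. x \<in> XX \<and> dd a x < \<delta> \<longrightarrow> dd (FF a) (FF x) < e"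
      using a
    proof (rule XX_cases)
      assume ac: "a \<in> {-1..<0}"
      hence a0: "a < 0" by simp
      obtain N where N: "\<forall>n. N \<le> nat \<bar>n\<bar> \<longrightarrow> eta n < e/2" using eta_small[of "e/2"] e by auto
      define \<delta> where "\<delta> = min (e/2) ((1/2)^(N+1))"
      have dpos: "0 < \<delta>" using e by (simp add: \<delta>_def)
      have dle: "\<delta> \<le> e/2" by (simp add: \<delta>_def)
      show ?thesis
      proof (intro exI conjI allI impI)
        show "0 < \<delta>" by fact
        fix x assume "x \<in> XX \<and> dd a x < \<delta>"
        hence x: "x \<in> XX" and dx: "dd a x < \<delta>" by auto
        show "dd (FF a) (FF x) < e" using x
        proof (rule XX_cases)
          assume "x \<in> {-1..<0}"
          hence x0: "x < 0" by simp
          have "dd (FF a) (FF x) = cmod (cis (2*pi*al) * (EE a - EE x))"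
            using EE_FF_circ[OF a0] EE_FF_circ[OF x0] by (simp add: dd_def right_diff_distrib)
          also have "\<dots> = dd a x" by (simp add: norm_mult dd_def)
          finally show ?thesis using dx dle e by linarith
        next
          fix n assume xn: "x = exp (of_int n)"
          have tn: "\<bar>tau n\<bar> < (1/2)^(N+1)" using dd_circ_orb[OF a0, of n] dx xn by (simp add: \<delta>_def)
          have "N \<le> nat \<bar>n\<bar>"
          proof (rule ccontr)
            assume "\<not> N \<le> nat \<bar>n\<bar>"
            hence "(1/2::real)^(N+1) \<le> (1/2)^(nat \<bar>n\<bar> + 1)" by (intro power_decreasing) auto
            thus False using tau_lower[of n] tn by linarith
          qed
          hence en: "eta n < e/2" using N by blast
          have "dd (FF a) (FF x) = cmod (cis (2*pi*al) * EE a - xo (n+1))"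
            using EE_FF_circ[OF a0] xn EE_orb[of "n+1"] by (simp add: dd_def FF_orb)
          also have "\<dots> \<le> cmod (cis (2*pi*al) * EE a - cis (2*pi*al) * xo n) + cmod (cis (2*pi*al) * xo n - xo (n+1))"
            by (rule norm_diff_triangle_le[where y="cis (2*pi*al) * xo n"]) simp_all
          also have "cmod (cis (2*pi*al) * EE a - cis (2*pi*al) * xo n) = dd a x"
            using xn by (simp add: dd_def EE_orb norm_mult flip: right_diff_distrib)
          also have "cmod (cis (2*pi*al) * xo n - xo (n+1)) = eta n"
            by (simp add: eta_def norm_minus_commute)
          finally show ?thesis using dx en by (simp add: \<delta>_def)
        qed
      qed
    next
      fix n assume an: "a = exp (of_int n)"
      define \<delta> where "\<delta> = \<bar>tau n\<bar> / 2"
      have dpos: "0 < \<delta>" using tau_ne[of n] by (simp add: \<delta>_def)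
      show ?thesis
      proof (intro exI conjI allI impI)
        show "0 < \<delta>" by fact
        fix x assume "x \<in> XX \<and> dd a x < \<delta>"
        hence x: "x \<in> XX" and dx: "dd a x < \<delta>" by auto
        have "x = a" using x
        proof (rule XX_cases)
          assume "x \<in> {-1..<0}"
          hence "\<bar>tau n\<bar> \<le> dd x a" using dd_circ_orb[of x n] an by simp
          hence False using dx M.commute[of a x] dpos by (simp add: \<delta>_def)
          thus ?thesis ..
        next
          fix m assume xm: "x = exp (of_int m)"
          show ?thesis
          proof (rule ccontr)
            assume "x \<noteq> a"
            hence "m \<noteq> n" using xm an by auto
            hence "\<bar>tau n\<bar> / 2 \<le> dd a x" using tau_sep[of m n] dd_orb_orb[of n m] xm an by simp
            thus False using dx by (simp add: \<delta>_def)
          qed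
        qed
        thus "dd (FF a) (FF x) < e" using e FF_XX a by (simp add: dd_def)
      qed
    qed
  qed
qed

lemma homeo: "homeomorphic_map (Metric_space.mtopology XX dd) (Metric_space.mtopology XX dd) FF"
proof -
  interpret M: Metric_space XX dd by (rule ms)
  show ?thesis
    by (rule continuous_imp_homeomorphic_map[OF cont cs M.Hausdorff_space_mtopology])
       (simp_all add: FF_XX FF_inj)
qed



lemma sq2: "(k::nat)^2 = 2 * m^2 \<Longrightarrow> m = 0"
proof (induction m arbitrary: k rule: less_induct)
  case (less m)
  show ?case
  proof (rule ccontr)
    assume m0: "m \<noteq> 0"
    have "even (k*k)" using less.prems by (simp add: power2_eq_square)
    hence "even k" by simp
    then obtain k' where k': "k = 2*k'" by blast
    hence "m^2 = 2*k'^2" using less.prems by (simp add: power2_eq_square)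
    hence "even (m*m)" by (simp add: power2_eq_square)
    hence "even m" by simp
    then obtain m' where m': "m = 2*m'" by blast
    hence e: "k'^2 = 2*m'^2" using \<open>m^2 = 2*k'^2\<close> by (simp add: power2_eq_square)
    have "m' < m" using m' m0 by simp
    hence "m' = 0" using less.IH e by blast
    thus False using m' m0 by simp
  qed
qed

lemma al_irr: "of_int m * al \<in> \<int> \<Longrightarrow> m = 0"
proof -
  assume "of_int m * al \<in> \<int>"
  then obtain k :: int where k: "of_int m * sqrt 2 = of_int k" unfolding al_def by (metis Ints_cases)
  hence "(of_int m * sqrt 2)^2 = (of_int k :: real)^2" by simp
  hence "of_int (2 * m^2) = (of_int (k^2) :: real)" by (simp add: power_mult_distrib)
  hence i: "2 * m^2 = k^2" by (simp only: of_int_eq_iff)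
  have "int ((nat \<bar>k\<bar>)^2) = k^2" "int (2 * (nat \<bar>m\<bar>)^2) = 2 * m^2" by simp_all
  hence "(nat \<bar>k\<bar>)^2 = 2 * (nat \<bar>m\<bar>)^2" using i by (metis of_nat_eq_iff)
  hence "nat \<bar>m\<bar> = 0" by (rule sq2)
  thus "m = 0" by simp
qed

lemma cis_al_ne: "m \<noteq> 0 \<Longrightarrow> cis (2*pi*(of_int m * al)) \<noteq> 1"
proof
  assume m: "m \<noteq> 0" and "cis (2*pi*(of_int m * al)) = 1"
  hence "cis (2*pi*(of_int m * al)) = cis (2*pi*0)" by simp
  hence "of_int m * al - 0 \<in> \<int>" by (rule cis_eq_int)
  thus False using al_irr m by simp
qed

lemma cis_shift_lb: "cmod (cis (X + Y) - 1) \<ge> cmod (cis X - 1) - \<bar>Y\<bar>"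
proof -
  have "cmod (cis X - 1) \<le> cmod (cis X - cis (X + Y)) + cmod (cis (X + Y) - 1)"
    by (rule norm_diff_triangle_le[where y="cis (X+Y)"]) simp_all
  moreover have "cmod (cis X - cis (X + Y)) = cmod (cis (- Y) - 1)" by (simp add: norm_cis_diff)
  moreover have "cmod (cis (- Y) - 1) \<le> \<bar>Y\<bar>" using cis_lip[of "-Y"] by simp
  ultimately show ?thesis by linarith
qed

lemma xo_pair_lb:
  "cmod (cis (2*pi*((of_int k' - of_int k) * al)) - 1) - 2*pi*\<bar>sq k' - sq k\<bar> - \<bar>tau k\<bar> - \<bar>tau k'\<bar>
     \<le> cmod (xo k - xo k')"
proof -
  define u where "u = cis (2*pi*(of_int k * al + sq k))"
  define v where "v = cis (2*pi*(of_int k' * al + sq k'))"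
  have "xo k - xo k' = (u - v) + (complex_of_real (tau k) * u - complex_of_real (tau k') * v)"
    by (simp add: xo_def u_def v_def algebra_simps)
  hence "cmod (u - v) \<le> cmod (xo k - xo k') + cmod (complex_of_real (tau k) * u - complex_of_real (tau k') * v)"
    by (metis add_diff_cancel norm_triangle_ineq4 order_trans norm_triangle_ineq2 diff_le_eq)
  also have "cmod (complex_of_real (tau k) * u - complex_of_real (tau k') * v) \<le> \<bar>tau k\<bar> + \<bar>tau k'\<bar>"
    using norm_triangle_ineq4[of "complex_of_real (tau k) * u" "complex_of_real (tau k') * v"]
    by (simp add: norm_mult u_def v_def)
  finally have a: "cmod (u - v) \<le> cmod (xo k - xo k') + (\<bar>tau k\<bar> + \<bar>tau k'\<bar>)" by simp
  have "cmod (u - v) = cmod (v - u)" by (rule norm_minus_commute)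
  also have "\<dots> = cmod (cis (2*pi*((of_int k' - of_int k) * al) + 2*pi*(sq k' - sq k)) - 1)"
    unfolding u_def v_def norm_cis_diff by (simp add: algebra_simps)
  finally have "cmod (u - v) \<ge> cmod (cis (2*pi*((of_int k' - of_int k) * al)) - 1) - \<bar>2*pi*(sq k' - sq k)\<bar>"
    using cis_shift_lb by simp
  moreover have "\<bar>2*pi*(sq k' - sq k)\<bar> = 2*pi*\<bar>sq k' - sq k\<bar>" by (simp add: abs_mult)
  ultimately show ?thesis using a by linarith
qed



lemma oo_lt: "i < j \<Longrightarrow> \<exists>\<epsilon>>0. \<exists>N::nat. \<forall>n\<ge>N. \<epsilon> \<le> cmod (xo (i + int n) - xo (j + int n))"
proof -
  assume ij: "i < j"
  define m where "m = j - i"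
  define c where "c = cmod (cis (2*pi*(of_int m * al)) - 1)"
  have "cis (2*pi*(of_int m * al)) \<noteq> 1" using cis_al_ne[of m] ij by (simp add: m_def)
  hence cpos: "0 < c" by (simp add: c_def)
  obtain N1 where N1: "\<forall>n. N1 \<le> nat \<bar>n\<bar> \<longrightarrow> \<bar>tau n\<bar> < c/8" using tau_eventually[of "c/8"] cpos by auto
  obtain R :: nat where R: "(8*pi*(of_int m) / c)^2 < real R" using reals_Archimedean2 by blast
  show ?thesis
  proof (intro exI conjI allI impI)
    show "0 < c/2" using cpos by simp
    fix n :: nat assume n: "N1 + R + nat \<bar>i\<bar> + nat \<bar>j\<bar> \<le> n"
    define k where "k = i + int n"
    define k' where "k' = j + int n"
    have kk: "of_int k' - of_int k = (of_int m :: real)" by (simp add: k_def k'_def m_def)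
    have "N1 \<le> nat \<bar>k\<bar>" using n by (simp add: k_def; arith)
    hence t1: "\<bar>tau k\<bar> < c/8" using N1 by blast
    have "N1 \<le> nat \<bar>k'\<bar>" using n by (simp add: k'_def; arith)
    hence t2: "\<bar>tau k'\<bar> < c/8" using N1 by blast
    have k0: "0 \<le> k" using n by (simp add: k_def; arith)
    have kR: "int R \<le> k'" using n by (simp add: k'_def; arith)
    have sqk: "sq k = sqrt (of_int k)" "sq k' = sqrt (of_int k')" using k0 kR by (simp_all add: sq_def)
    have kle: "k \<le> k'" using ij by (simp add: k_def k'_def)
    have mpos: "0 < (of_int m :: real)" using ij by (simp add: m_def)
    have Rpos: "0 < real R"
    proof -
      have "0 < (8*pi*(of_int m) / c)^2" using mpos cpos by simp
      thus ?thesis using R by linarith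
    qed
    have k'pos: "0 < (of_int k' :: real)" using kR Rpos by linarith
    have d0: "0 \<le> sqrt (of_int k') - sqrt (of_int k)" using kle by simp
    have d1: "sqrt (of_int k') - sqrt (of_int k) \<le> of_int m / sqrt (of_int k')"
      using sqrt_diff_le[of "of_int k" "of_int k'"] k0 kle k'pos kk by simp
    have "sqrt ((8*pi*(of_int m) / c)^2) < sqrt (of_int k')"
      using R kR by (simp only: real_sqrt_less_iff; linarith)
    hence "8*pi*(of_int m) / c < sqrt (of_int k')" using mpos cpos by simp
    hence "of_int m / sqrt (of_int k') < c / (8*pi)"
      using mpos cpos k'pos by (simp add: field_simps)
    moreover have "\<bar>sq k' - sq k\<bar> = sqrt (of_int k') - sqrt (of_int k)" using d0 sqk by simp
    ultimately have "\<bar>sq k' - sq k\<bar> < c/(8*pi)" using d1 by linarith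
    hence "2*pi*\<bar>sq k' - sq k\<bar> < 2*pi*(c/(8*pi))" by (rule mult_strict_left_mono) simp
    hence "2*pi*\<bar>sq k' - sq k\<bar> < c/4" by simp
    moreover have "cmod (cis (2*pi*((of_int k' - of_int k) * al)) - 1) = c" using kk by (simp add: c_def)
    ultimately have "c/2 \<le> cmod (xo k - xo k')" using xo_pair_lb[of k' k] t1 t2 by linarith
    thus "c/2 \<le> cmod (xo (i + int n) - xo (j + int n))" by (simp add: k_def k'_def)
  qed
qed

lemma oo: "i \<noteq> j \<Longrightarrow> \<exists>\<epsilon>>0. \<exists>N::nat. \<forall>n\<ge>N. \<epsilon> \<le> cmod (xo (i + int n) - xo (j + int n))"
proof -
  assume "i \<noteq> j"
  hence "i < j \<or> j < i" by arith
  thus ?thesis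
  proof
    assume "j < i"
    from oo_lt[OF this] show ?thesis by (simp add: norm_minus_commute)
  qed (rule oo_lt)
qed

lemma oc_lb:
  assumes k: "1 \<le> k" and J1: "of_int J + 1/4 \<le> sqrt (of_int k) - b" and J2: "sqrt (of_int k) - b \<le> of_int J + 3/4"
  shows "1/2 \<le> cmod (xo k - cis (2*pi*(of_int k * al + b)))"
proof -
  define u where "u = cis (2*pi*(of_int k * al + sq k))"
  define w where "w = cis (2*pi*(of_int k * al + b))"
  have sqk: "sq k = sqrt (of_int k)" using k by (simp add: sq_def)
  have "xo k - w = (u - w) + complex_of_real (tau k) * u" by (simp add: xo_def u_def algebra_simps)
  hence "cmod (u - w) \<le> cmod (xo k - w) + cmod (complex_of_real (tau k) * u)"
    by (metis add_diff_cancel norm_triangle_ineq4 order_trans norm_triangle_ineq2 diff_le_eq)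
  hence a: "cmod (u - w) \<le> cmod (xo k - w) + \<bar>tau k\<bar>" by (simp add: norm_mult u_def)
  define t where "t = sqrt (of_int k) - b - of_int J"
  have "cmod (u - w) = cmod (cis (2*pi*(t + of_int J)) - 1)"
    unfolding u_def w_def norm_cis_diff sqk t_def by (simp add: algebra_simps)
  also have "\<dots> = cmod (cis (2*pi*t) - 1)" by (simp add: cis_per)
  finally have uw: "cmod (u - w) = cmod (cis (2*pi*t) - 1)" .
  have t1: "1/4 \<le> t" "t \<le> 3/4" using J1 J2 by (simp_all add: t_def)
  have "0 \<le> cos (2*pi*t - pi)"
    by (rule cos_ge_zero) (use t1 pi_gt_zero in \<open>simp_all add: field_simps\<close>)
  hence "cos (2*pi*t) \<le> 0" by simp
  hence "1 \<le> cmod (cis (2*pi*t) - 1)" by (rule cis_far)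
  moreover have "\<bar>tau k\<bar> \<le> 1/2" using k by (intro tau_nz_half) simp
  ultimately show ?thesis using a uw by (simp add: w_def)
qed



lemma oc: "\<exists>T. thick_set T \<and> (\<forall>n\<in>T. 1/2 \<le> cmod (xo (i + int n) - cis (2*pi*(a + real n * al))))"
proof -
  define b where "b = a - of_int i * al"
  define T where "T = {n::nat. 1 \<le> i + int n \<and> (\<exists>J::int. of_int J + 1/4 \<le> sqrt (of_int (i + int n)) - b
                          \<and> sqrt (of_int (i + int n)) - b \<le> of_int J + 3/4)}"
  have bound: "\<forall>n\<in>T. 1/2 \<le> cmod (xo (i + int n) - cis (2*pi*(a + real n * al)))"
  proof
    fix n assume "n \<in> T"
    then obtain J where n1: "1 \<le> i + int n" and J: "of_int J + 1/4 \<le> sqrt (of_int (i + int n)) - b"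
        "sqrt (of_int (i + int n)) - b \<le> of_int J + 3/4" by (auto simp: T_def)
    have "a + real n * al = of_int (i + int n) * al + b" by (simp add: b_def algebra_simps)
    thus "1/2 \<le> cmod (xo (i + int n) - cis (2*pi*(a + real n * al)))"
      using oc_lb[OF n1 J] by simp
  qed
  have "thick_set T" unfolding thick_set_def
  proof
    fix L :: nat
    define J :: int where "J = \<lceil>real L + 2 + \<bar>of_int i\<bar> + \<bar>b\<bar>\<rceil>"
    define v where "v = of_int J + b + 1/4"
    define K :: int where "K = \<lceil>v^2\<rceil>"
    have Jge: "real L + 2 + \<bar>of_int i\<bar> + \<bar>b\<bar> \<le> of_int J" unfolding J_def by (rule le_of_int_ceiling)
    have vge: "real L + 2 + \<bar>of_int i\<bar> \<le> v" using Jge abs_ge_minus_self[of b] unfolding v_def by linarith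
    have v1: "1 \<le> v" using vge by linarith
    have vv: "v \<le> v^2" using v1 by (simp add: power2_eq_square)
    have K1: "v^2 \<le> of_int K" "of_int K < v^2 + 1" unfolding K_def by (simp_all add: le_of_int_ceiling) linarith
    have Ki: "i \<le> K"
    proof -
      have "of_int i \<le> v" using vge by linarith
      hence "(of_int i :: real) \<le> of_int K" using vv K1 by linarith
      thus ?thesis by simp
    qed
    define s where "s = nat (K - i)"
    show "\<exists>s. {s..<s + L} \<subseteq> T"
    proof (intro exI subsetI)
      fix n assume "n \<in> {s..<s + L}"
      hence n1: "K \<le> i + int n" "i + int n < K + int L" using Ki by (auto simp: s_def)
      define k where "k = i + int n"
      have c1: "(of_int K::real) \<le> of_int k" using n1(1) unfolding k_def by (simp only: of_int_le_iff)
      have c2: "(of_int k::real) \<le> of_int (K + int L - 1)" using n1(2) unfolding k_def by (subst of_int_le_iff) linarith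
      have c3: "(of_int (K + int L - 1) :: real) = of_int K + real L - 1" by simp
      have kr: "v^2 \<le> of_int k" "of_int k < v^2 + real L" using c1 c2 c3 K1 by linarith+
      have k1: "1 \<le> k"
      proof -
        have "(1::real) \<le> of_int k" using kr v1 vv by linarith
        thus ?thesis by simp
      qed
      have "sqrt (v^2) \<le> sqrt (of_int k)" using kr by (simp only: real_sqrt_le_iff)
      hence s1: "v \<le> sqrt (of_int k)" using v1 by simp
      have "of_int k < (v + 1/2)^2" using kr vge by (simp add: power2_eq_square algebra_simps; linarith)
      hence "sqrt (of_int k) < sqrt ((v + 1/2)^2)" by (simp only: real_sqrt_less_iff)
      hence s2: "sqrt (of_int k) < v + 1/2" using v1 by simp
      show "n \<in> T" unfolding T_def
        using k1 s1 s2 by (auto simp: k_def v_def intro!: exI[of _ J])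
    qed
  qed
  thus ?thesis using bound by blast
qed

lemma not_synd: "thick_set T \<Longrightarrow> (\<forall>n\<in>T. e \<le> (g n::real)) \<Longrightarrow> \<not> syndetic {n. g n < e}"
proof
  assume t: "thick_set T" and b: "\<forall>n\<in>T. e \<le> (g n::real)" and s: "syndetic {n. g n < e}"
  have "{n. g n < e} \<inter> T = {}"
  proof (rule equals0I)
    fix n assume "n \<in> {n. g n < e} \<inter> T"
    hence "g n < e" "n \<in> T" by auto
    thus False using b by fastforce
  qed
  thus False using s t unfolding syndetic_def by blast
qed

lemma thick_ge: "thick_set {N::nat..}"
  unfolding thick_set_def by auto

lemma thick_UNIV: "thick_set UNIV"
  unfolding thick_set_def by auto

lemma synd_UNIV: "syndetic UNIV"
  unfolding syndetic_def thick_set_def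
proof (intro allI impI)
  fix T :: "nat set" assume "\<forall>k. \<exists>a. {a..<a + k} \<subseteq> T"
  then obtain a where "{a..<a+1} \<subseteq> T" by blast
  thus "UNIV \<inter> T \<noteq> {}" by auto
qed

lemma dd_circ_n: "p \<in> {-1..<0} \<Longrightarrow> EE ((FF^^n) p) = cis (2*pi*(p + real n * al))"
  using FFn_circ by blast

lemma dd_orb_n: "EE ((FF^^n) (exp (of_int i))) = xo (i + int n)"
  by (simp only: FFn_orb EE_orb)

lemma prox: "(1, -1) \<in> Prox XX dd FF"
proof -
  have one: "(1::real) = exp (of_int 0)" by simp
  have in1: "(1::real) \<in> XX" using orb_XX[of 0] by simp
  have in2: "(-1::real) \<in> XX" by (simp add: XX_def)
  define u where "u = (\<lambda>n. ereal (dd ((FF^^n) 1) ((FF^^n) (-1))))"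
  have un: "dd ((FF^^n) 1) ((FF^^n) (-1)) = cmod (xo (int n) - cis (2*pi*(-1 + real n * al)))" for n
    unfolding dd_def using dd_orb_n[of n 0] dd_circ_n[of "-1" n] one by simp
  define r :: "nat \<Rightarrow> nat" where "r k = k^2" for k
  have r: "strict_mono r" unfolding strict_mono_def r_def by (simp add: power_strict_mono)
  have g: "dd ((FF^^(r k)) 1) ((FF^^(r k)) (-1)) = \<bar>tau (int (k^2))\<bar>" for k
  proof -
    have sqk: "sq (int (k^2)) = real k" by (simp add: sq_def)
    have "cis (2*pi*(of_int (int (k^2)) * al + sq (int (k^2)))) = cis (2*pi*(real (k^2) * al + of_int (int k)))"
      using sqk by simp
    also have "\<dots> = cis (2*pi*(real (k^2) * al))" by (rule cis_per)
    also have "\<dots> = cis (2*pi*(-1 + real (k^2) * al + of_int 1))" by simp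
    also have "\<dots> = cis (2*pi*(-1 + real (k^2) * al))" by (rule cis_per)
    finally have e: "cis (2*pi*(of_int (int (k^2)) * al + sq (int (k^2)))) = cis (2*pi*(-1 + real (k^2) * al))" .
    have "xo (int (k^2)) - cis (2*pi*(-1 + real (k^2) * al))
        = complex_of_real (tau (int (k^2))) * cis (2*pi*(-1 + real (k^2) * al))"
      unfolding xo_def e by (simp add: algebra_simps)
    hence "cmod (xo (int (k^2)) - cis (2*pi*(-1 + real (k^2) * al))) = \<bar>tau (int (k^2))\<bar>"
      by (simp add: norm_mult)
    thus ?thesis using un[of "k^2"] by (simp add: r_def)
  qed
  have "(\<lambda>k. dd ((FF^^(r k)) 1) ((FF^^(r k)) (-1))) \<longlonglongrightarrow> 0"
  proof (rule Lim_null_comparison)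
    show "eventually (\<lambda>k. norm (dd ((FF^^(r k)) 1) ((FF^^(r k)) (-1))) \<le> (1/2)^k) sequentially"
    proof (intro always_eventually allI)
      fix k :: nat
      have "k \<le> k^2" by (cases k) (auto simp: power2_eq_square)
      hence p1: "(1/2::real)^(k^2) \<le> (1/2)^k" by (intro power_decreasing) auto
      moreover have "\<bar>tau (int (k^2))\<bar> \<le> (1/2)^(k^2)"
      proof -
        have h: "\<bar>tau (int (k^2))\<bar> \<le> (1/2)^(nat \<bar>int (k^2)\<bar>)" by (rule tau_upper)
        have e: "nat \<bar>int (k^2)\<bar> = k^2" by (simp only: abs_of_nat nat_int)
        show ?thesis using h unfolding e .
      qed
      moreover have "norm (dd ((FF^^(r k)) 1) ((FF^^(r k)) (-1))) = \<bar>tau (int (k^2))\<bar>" using g[of k] by simp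
      ultimately show "norm (dd ((FF^^(r k)) 1) ((FF^^(r k)) (-1))) \<le> (1/2)^k" using p1 by linarith
    qed
    show "(\<lambda>k. (1/2::real)^k) \<longlonglongrightarrow> 0" by (rule LIMSEQ_power_zero) simp
  qed
  hence "(u \<circ> r) \<longlonglongrightarrow> ereal 0" unfolding u_def comp_def by (rule tendsto_ereal)
  hence "liminf (u \<circ> r) = 0" by (simp add: lim_imp_Liminf zero_ereal_def)
  hence le: "liminf u \<le> 0" using liminf_subseq_mono[OF r, of u] by simp
  have ge: "0 \<le> liminf u" unfolding le_Liminf_iff
  proof (intro allI impI)
    fix y :: ereal assume "y < 0"
    thus "eventually (\<lambda>n. y < u n) sequentially" by (simp add: u_def dd_def order.strict_trans2)
  qed
  have "liminf u = 0" using le ge by simp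
  thus ?thesis using in1 in2 by (simp add: Prox_def u_def)
qed



lemma dd_self: "dd y y = 0" by (simp add: dd_def)

lemma key:
  assumes p: "p \<in> XX" and q: "q \<in> XX" and pq: "p \<noteq> q"
  shows "\<exists>e>0. \<exists>T. thick_set T \<and> (\<forall>n\<in>T. e \<le> dd ((FF^^n) p) ((FF^^n) q))"
  using p
proof (rule XX_cases)
  assume pc: "p \<in> {-1..<0}"
  show ?thesis using q
  proof (rule XX_cases)
    assume qc: "q \<in> {-1..<0}"
    have "dd ((FF^^n) p) ((FF^^n) q) = dd p q" for n
    proof -
      have "cis (2*pi*(p + real n * al)) - cis (2*pi*(q + real n * al))
          = cis (2*pi*(real n * al)) * (cis (2*pi*p) - cis (2*pi*q))"
        by (simp add: cis_mult algebra_simps)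
      thus ?thesis using pc qc by (simp add: dd_def dd_circ_n norm_mult EE_circ)
    qed
    moreover have "0 < dd p q" using ms p q pq by (simp add: Metric_space.mdist_pos_less)
    ultimately show ?thesis using thick_UNIV by (intro exI[of _ "dd p q"] conjI exI[of _ UNIV]) auto
  next
    fix j assume qj: "q = exp (of_int j)"
    obtain T where T: "thick_set T" "\<forall>n\<in>T. 1/2 \<le> cmod (xo (j + int n) - cis (2*pi*(p + real n * al)))"
      using oc by blast
    have "dd ((FF^^n) p) ((FF^^n) q) = cmod (xo (j + int n) - cis (2*pi*(p + real n * al)))" for n
    proof -
      have "dd ((FF^^n) p) ((FF^^n) q) = cmod (cis (2*pi*(p + real n * al)) - xo (j + int n))"
        using pc qj by (simp only: dd_def dd_circ_n dd_orb_n)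
      thus ?thesis by (simp only: norm_minus_commute)
    qed
    thus ?thesis using T by (intro exI[of _ "1/2"] conjI exI[of _ T]) auto
  qed
next
  fix i assume pi: "p = exp (of_int i)"
  show ?thesis using q
  proof (rule XX_cases)
    assume qc: "q \<in> {-1..<0}"
    obtain T where T: "thick_set T" "\<forall>n\<in>T. 1/2 \<le> cmod (xo (i + int n) - cis (2*pi*(q + real n * al)))"
      using oc by blast
    have "dd ((FF^^n) p) ((FF^^n) q) = cmod (xo (i + int n) - cis (2*pi*(q + real n * al)))" for n
      using qc pi by (simp only: dd_def dd_circ_n dd_orb_n)
    thus ?thesis using T by (intro exI[of _ "1/2"] conjI exI[of _ T]) auto
  next
    fix j assume qj: "q = exp (of_int j)"
    have "i \<noteq> j" using pi qj pq by auto
    then obtain e N where e: "0 < e" "\<forall>n\<ge>N. e \<le> cmod (xo (i + int n) - xo (j + int n))"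
      using oo by blast
    have "dd ((FF^^n) p) ((FF^^n) q) = cmod (xo (i + int n) - xo (j + int n))" for n
      using pi qj by (simp only: dd_def dd_orb_n)
    thus ?thesis using e thick_ge[of N] by (intro exI[of _ e] conjI exI[of _ "{N..}"]) auto
  qed
qed

lemma sprox: "SProx XX dd FF = diag_on XX"
proof
  show "diag_on XX \<subseteq> SProx XX dd FF"
  proof
    fix z assume "z \<in> diag_on XX"
    then obtain x where x: "z = (x, x)" "x \<in> XX" by (auto simp: diag_on_def)
    have "\<And>e. 0 < e \<Longrightarrow> {n. dd ((FF^^n) x) ((FF^^n) x) < e} = UNIV" by (simp only: dd_self) auto
    hence "\<forall>e>0. syndetic {n. dd ((FF^^n) x) ((FF^^n) x) < e}" using synd_UNIV by simp
    thus "z \<in> SProx XX dd FF" using x unfolding SProx_def by blast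
  qed
  show "SProx XX dd FF \<subseteq> diag_on XX"
  proof
    fix z assume z: "z \<in> SProx XX dd FF"
    then obtain p q where pq: "z = (p, q)" "p \<in> XX" "q \<in> XX"
      and H: "\<forall>e>0. syndetic {n. dd ((FF^^n) p) ((FF^^n) q) < e}" by (auto simp: SProx_def)
    show "z \<in> diag_on XX"
    proof (cases "p = q")
      case True thus ?thesis using pq by (auto simp: diag_on_def)
    next
      case False
      then obtain e T where e: "0 < e" "thick_set T" "\<forall>n\<in>T. e \<le> dd ((FF^^n) p) ((FF^^n) q)"
        using key[OF pq(2) pq(3) False] by auto
      have ns: "\<not> syndetic {n. dd ((FF^^n) p) ((FF^^n) q) < e}" by (rule not_synd[OF e(2) e(3)])
      have s: "syndetic {n. dd ((FF^^n) p) ((FF^^n) q) < e}" using H e(1) by simp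
      from ns s show ?thesis by (rule notE)
    qed
  qed
qed

theorem mainTheorem13:
  shows "\<exists>(X :: real set) (d :: real \<Rightarrow> real \<Rightarrow> real) (f :: real \<Rightarrow> real).
    Metric_space X d \<and>
    compact_space (Metric_space.mtopology X d) \<and>
    homeomorphic_map (Metric_space.mtopology X d) (Metric_space.mtopology X d) f \<and>
    SProx X d f = diag_on X \<and>
    Prox X d f \<noteq> diag_on X"
proof (intro exI[of _ XX] exI[of _ dd] exI[of _ FF] conjI)
  show "Metric_space XX dd" by (rule ms)
  show "compact_space (Metric_space.mtopology XX dd)" by (rule cs)
  show "homeomorphic_map (Metric_space.mtopology XX dd) (Metric_space.mtopology XX dd) FF" by (rule homeo)
  show "SProx XX dd FF = diag_on XX" by (rule sprox)
  have "(1::real, -1) \<notin> diag_on XX" by (auto simp: diag_on_def)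
  thus "Prox XX dd FF \<noteq> diag_on XX" using prox by blast
qed

end
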